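(* Let $x_1<x_2<x_3$ and $y_1<y_2<y_3$ be real numbers and $Z=(z_{ij})\in\mathbb{R}^{3\times 3}$. Put $P_{ij}:=(x_i,y_j,z_{ij})\in\mathbb{R}^3$ for $i,j\in\{1,2,3\}$, and define $A_i:=\operatorname{conv}\{P_{i1},P_{i2},P_{i3}\}$ and $B_j:=\operatorname{conv}\{P_{1j},P_{2j},P_{3j}\}$. Then either there is a line contained in the plane $\{(x_2,s,t): s,t\in\mathbb{R}\}$ intersecting all of $B_1,B_2,B_3$, or there is a line contained in the plane $\{(s,y_2,t): s,t\in\mathbb{R}\}$ intersecting all of $A_1,A_2,A_3$. *)

theory Defs
  imports "HOL-Analysis.Analysis"
begin

definition is_line :: "(real \<times> real \<times> real) set \<Rightarrow> bool" where
  "is_line L \<longleftrightarrow> (\<exists>p v. v \<noteq> 0 \<and> L = {p + t *\<^sub>R v | t. True})"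

end

theory Submission
  imports Defs
begin

lemma oneD:
  fixes vv ww mm aa :: real
  shows "(\<exists>t s. 0 \<le> t \<and> t \<le> 1 \<and> 0 \<le> s \<and> s \<le> 1 \<and> (1-t) * vv + t * mm = (1-s) * aa + s * ww)
       \<or> (\<exists>t s. 0 \<le> t \<and> t \<le> 1 \<and> 0 \<le> s \<and> s \<le> 1 \<and> (1-t) * ww + t * mm = (1-s) * aa + s * vv)"
proof -
  have key: "max (min vv mm) (min aa ww) \<le> min (max vv mm) (max aa ww)
     \<or> max (min ww mm) (min aa vv) \<le> min (max ww mm) (max aa vv)"
    by (smt (verit))
  have seg: "\<And>p q r :: real. p \<in> closed_segment q r \<Longrightarrow> \<exists>t. 0 \<le> t \<and> t \<le> 1 \<and> p = (1-t) * q + t * r"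
    by (auto simp: in_segment)
  show ?thesis
  proof (cases "max (min vv mm) (min aa ww) \<le> min (max vv mm) (max aa ww)")
    case True
    define p where "p = max (min vv mm) (min aa ww)"
    have "p \<in> closed_segment vv mm" "p \<in> closed_segment aa ww"
      using True by (auto simp: closed_segment_eq_real_ivl p_def)
    then obtain t s where "0 \<le> t \<and> t \<le> 1 \<and> p = (1-t) * vv + t * mm" "0 \<le> s \<and> s \<le> 1 \<and> p = (1-s) * aa + s * ww"
      using seg by meson
    then show ?thesis by metis
  next
    case False
    then have T: "max (min ww mm) (min aa vv) \<le> min (max ww mm) (max aa vv)" using key by auto
    define p where "p = max (min ww mm) (min aa vv)"
    have "p \<in> closed_segment ww mm" "p \<in> closed_segment aa vv"
      using T by (auto simp: closed_segment_eq_real_ivl p_def)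
    then obtain t s where "0 \<le> t \<and> t \<le> 1 \<and> p = (1-t) * ww + t * mm" "0 \<le> s \<and> s \<le> 1 \<and> p = (1-s) * aa + s * vv"
      using seg by meson
    then show ?thesis by metis
  qed
qed

lemma tri_memX:
  fixes a1 a2 a3 b c1 c2 c3 t al be :: real
  assumes "0 \<le> t" "t \<le> 1" "0 \<le> al" "0 \<le> be" "al + be = 1" "al * a1 + be * a3 = a2"
  shows "(a2, b, (1-t) * c2 + t * (al * c1 + be * c3)) \<in> convex hull {(a1,b,c1),(a2,b,c2),(a3,b,c3)}"
proof -
  have e1: "t * al * a1 + (1-t) * a2 + t * be * a3 = t * (al * a1 + be * a3) + (1-t) * a2"
    by (simp add: algebra_simps)
  have e1': "a2 = t * al * a1 + (1-t) * a2 + t * be * a3"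
    unfolding e1 assms(6) by (simp add: algebra_simps)
  have e2: "t * al * b + (1-t) * b + t * be * b = t * (al + be) * b + (1-t) * b"
    by (simp add: algebra_simps)
  have e2': "b = t * al * b + (1-t) * b + t * be * b"
    unfolding e2 assms(5) by (simp add: algebra_simps)
  have e3: "(1-t) * c2 + t * (al * c1 + be * c3) = t * al * c1 + (1-t) * c2 + t * be * c3"
    by (simp add: algebra_simps)
  have "(a2, b, (1-t) * c2 + t * (al * c1 + be * c3)) = (t * al) *\<^sub>R (a1,b,c1) + (1-t) *\<^sub>R (a2,b,c2) + (t * be) *\<^sub>R (a3,b,c3)"
    using e1' e2' e3 by simp
  moreover have "0 \<le> t * al" "0 \<le> 1-t" "0 \<le> t * be"
    using assms by auto
  moreover have "t * al + (1-t) + t * be = 1"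
  proof -
    have "t * al + (1-t) + t * be = t * (al + be) + (1-t)" by (simp add: algebra_simps)
    then show ?thesis using assms(5) by simp
  qed
  ultimately show ?thesis unfolding convex_hull_3 by blast
qed

lemma tri_memY:
  fixes a1 a2 a3 b c1 c2 c3 t al be :: real
  assumes "0 \<le> t" "t \<le> 1" "0 \<le> al" "0 \<le> be" "al + be = 1" "al * a1 + be * a3 = a2"
  shows "(b, a2, (1-t) * c2 + t * (al * c1 + be * c3)) \<in> convex hull {(b,a1,c1),(b,a2,c2),(b,a3,c3)}"
proof -
  have e1: "t * al * a1 + (1-t) * a2 + t * be * a3 = t * (al * a1 + be * a3) + (1-t) * a2"
    by (simp add: algebra_simps)
  have e1': "a2 = t * al * a1 + (1-t) * a2 + t * be * a3"
    unfolding e1 assms(6) by (simp add: algebra_simps)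
  have e2: "t * al * b + (1-t) * b + t * be * b = t * (al + be) * b + (1-t) * b"
    by (simp add: algebra_simps)
  have e2': "b = t * al * b + (1-t) * b + t * be * b"
    unfolding e2 assms(5) by (simp add: algebra_simps)
  have e3: "(1-t) * c2 + t * (al * c1 + be * c3) = t * al * c1 + (1-t) * c2 + t * be * c3"
    by (simp add: algebra_simps)
  have "(b, a2, (1-t) * c2 + t * (al * c1 + be * c3)) = (t * al) *\<^sub>R (b,a1,c1) + (1-t) *\<^sub>R (b,a2,c2) + (t * be) *\<^sub>R (b,a3,c3)"
    using e1' e2' e3 by simp
  moreover have "0 \<le> t * al" "0 \<le> 1-t" "0 \<le> t * be"
    using assms by auto
  moreover have "t * al + (1-t) + t * be = 1"
  proof -
    have "t * al + (1-t) + t * be = t * (al + be) + (1-t)" by (simp add: algebra_simps)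
    then show ?thesis using assms(5) by simp
  qed
  ultimately show ?thesis unfolding convex_hull_3 by blast
qed

theorem lemma3:
  fixes x y :: "nat \<Rightarrow> real" and z :: "nat \<Rightarrow> nat \<Rightarrow> real"
    and P :: "nat \<Rightarrow> nat \<Rightarrow> real \<times> real \<times> real"
    and A B :: "nat \<Rightarrow> (real \<times> real \<times> real) set"
  assumes "x 1 < x 2" "x 2 < x 3" "y 1 < y 2" "y 2 < y 3"
    and "\<And>i j. P i j = (x i, y j, z i j)"
    and "\<And>i. A i = convex hull {P i 1, P i 2, P i 3}"
    and "\<And>j. B j = convex hull {P 1 j, P 2 j, P 3 j}"
  shows "(\<exists>L. is_line L \<and> L \<subseteq> {(x 2, s, t) | s t. True} \<and>
            (\<forall>j\<in>{1,2,3}. L \<inter> B j \<noteq> {}))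
       \<or> (\<exists>L. is_line L \<and> L \<subseteq> {(s, y 2, t) | s t. True} \<and>
            (\<forall>i\<in>{1,2,3}. L \<inter> A i \<noteq> {}))"
proof -
  define be where "be = (x 2 - x 1) / (x 3 - x 1)"
  define al where "al = 1 - be"
  define mu where "mu = (y 2 - y 1) / (y 3 - y 1)"
  define la where "la = 1 - mu"
  have be0: "0 \<le> be" "be \<le> 1" using assms(1,2) by (auto simp: be_def field_simps)
  have mu0: "0 \<le> mu" "mu \<le> 1" using assms(3,4) by (auto simp: mu_def field_simps)
  have al0: "0 \<le> al" "al + be = 1" using be0 by (auto simp: al_def)
  have la0: "0 \<le> la" "la + mu = 1" using mu0 by (auto simp: la_def)
  have ye': "y 1 + mu * (y 3 - y 1) = y 2"
    using assms(3,4) by (simp add: mu_def field_simps)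
  have xe': "x 1 + be * (x 3 - x 1) = x 2"
    using assms(1,2) by (simp add: be_def field_simps)
  have xe: "al * x 1 + be * x 3 = x 2"
    using xe' by (simp add: al_def algebra_simps)
  have ye: "la * y 1 + mu * y 3 = y 2"
    using ye' by (simp add: la_def algebra_simps)
  have Bj: "B j = convex hull {(x 1, y j, z 1 j), (x 2, y j, z 2 j), (x 3, y j, z 3 j)}" for j
    using assms(5,7) by simp
  have Ai: "A i = convex hull {(x i, y 1, z i 1), (x i, y 2, z i 2), (x i, y 3, z i 3)}" for i
    using assms(5,6) by simp
  have memB: "\<And>t j. 0 \<le> t \<Longrightarrow> t \<le> 1 \<Longrightarrow>
      (x 2, y j, (1-t) * z 2 j + t * (al * z 1 j + be * z 3 j)) \<in> B j"
    unfolding Bj by (rule tri_memX) (use al0 be0 xe in auto)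
  have memA: "\<And>t i. 0 \<le> t \<Longrightarrow> t \<le> 1 \<Longrightarrow>
      (x i, y 2, (1-t) * z i 2 + t * (la * z i 1 + mu * z i 3)) \<in> A i"
    unfolding Ai by (rule tri_memY) (use la0 mu0 ye in auto)
  define w where "w j = al * z 1 j + be * z 3 j" for j
  define v where "v i = la * z i 1 + mu * z i 3" for i
  define M where "M = la * w 1 + mu * w 3"
  have M2: "M = al * v 1 + be * v 3"
    unfolding M_def w_def v_def la_def al_def by (simp add: algebra_simps)
  from oneD[of "v 2" M "z 2 2" "w 2"] show ?thesis
  proof
    assume "\<exists>t s. 0 \<le> t \<and> t \<le> 1 \<and> 0 \<le> s \<and> s \<le> 1 \<and> (1-t) * v 2 + t * M = (1-s) * z 2 2 + s * w 2"
    then obtain t s where ts: "0 \<le> t" "t \<le> 1" "0 \<le> s" "s \<le> 1"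
      and eq: "(1-t) * v 2 + t * M = (1-s) * z 2 2 + s * w 2" by blast
    define c where "c j = (1-t) * z 2 j + t * (al * z 1 j + be * z 3 j)" for j
    define L where "L = {(x 2, y 1, c 1) + r *\<^sub>R (0, y 3 - y 1, c 3 - c 1) | r. True}"
    have "is_line L"
      unfolding is_line_def L_def
      apply (rule exI[of _ "(x 2, y 1, c 1)"], rule exI[of _ "(0, y 3 - y 1, c 3 - c 1)"])
      using assms(3,4) by (auto simp: zero_prod_def)
    moreover have "L \<subseteq> {(x 2, s, t) | s t. True}"
      unfolding L_def by auto
    moreover have "L \<inter> B j \<noteq> {}" if "j \<in> {1,2,3}" for j
    proof -
      have p1: "(x 2, y 1, c 1) \<in> L"
      proof -
        have "(x 2, y 1, c 1) = (x 2, y 1, c 1) + 0 *\<^sub>R (0, y 3 - y 1, c 3 - c 1)" by simp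
        then show ?thesis unfolding L_def by blast
      qed
      have p3: "(x 2, y 3, c 3) \<in> L"
      proof -
        have "(x 2, y 3, c 3) = (x 2, y 1, c 1) + 1 *\<^sub>R (0, y 3 - y 1, c 3 - c 1)" by simp
        then show ?thesis unfolding L_def by blast
      qed
      have p2: "(x 2, y 2, (1-s) * z 2 2 + s * (al * z 1 2 + be * z 3 2)) \<in> L"
      proof -
        have "c 1 + mu * (c 3 - c 1) = (1-t) * v 2 + t * M"
          unfolding c_def v_def M_def w_def la_def by (simp add: algebra_simps)
        also have "\<dots> = (1-s) * z 2 2 + s * (al * z 1 2 + be * z 3 2)"
          using eq by (simp add: w_def)
        finally have "(x 2, y 2, (1-s) * z 2 2 + s * (al * z 1 2 + be * z 3 2))
            = (x 2, y 1, c 1) + mu *\<^sub>R (0, y 3 - y 1, c 3 - c 1)"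
          using ye' by simp
        then show ?thesis unfolding L_def by blast
      qed
      show ?thesis using that p1 p2 p3 memB[OF ts(1,2)] memB[OF ts(3,4)]
        unfolding c_def by blast
    qed
    ultimately show ?thesis by blast
  next
    assume "\<exists>t s. 0 \<le> t \<and> t \<le> 1 \<and> 0 \<le> s \<and> s \<le> 1 \<and> (1-t) * w 2 + t * M = (1-s) * z 2 2 + s * v 2"
    then obtain t s where ts: "0 \<le> t" "t \<le> 1" "0 \<le> s" "s \<le> 1"
      and eq: "(1-t) * w 2 + t * M = (1-s) * z 2 2 + s * v 2" by blast
    define c where "c i = (1-t) * z i 2 + t * (la * z i 1 + mu * z i 3)" for i
    define L where "L = {(x 1, y 2, c 1) + r *\<^sub>R (x 3 - x 1, 0, c 3 - c 1) | r. True}"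
    have "is_line L"
      unfolding is_line_def L_def
      apply (rule exI[of _ "(x 1, y 2, c 1)"], rule exI[of _ "(x 3 - x 1, 0, c 3 - c 1)"])
      using assms(1,2) by (auto simp: zero_prod_def)
    moreover have "L \<subseteq> {(s, y 2, t) | s t. True}"
      unfolding L_def by auto
    moreover have "L \<inter> A i \<noteq> {}" if "i \<in> {1,2,3}" for i
    proof -
      have p1: "(x 1, y 2, c 1) \<in> L"
      proof -
        have "(x 1, y 2, c 1) = (x 1, y 2, c 1) + 0 *\<^sub>R (x 3 - x 1, 0, c 3 - c 1)" by simp
        then show ?thesis unfolding L_def by blast
      qed
      have p3: "(x 3, y 2, c 3) \<in> L"
      proof -
        have "(x 3, y 2, c 3) = (x 1, y 2, c 1) + 1 *\<^sub>R (x 3 - x 1, 0, c 3 - c 1)" by simp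
        then show ?thesis unfolding L_def by blast
      qed
      have p2: "(x 2, y 2, (1-s) * z 2 2 + s * (la * z 2 1 + mu * z 2 3)) \<in> L"
      proof -
        have "c 1 + be * (c 3 - c 1) = (1-t) * w 2 + t * M"
          unfolding c_def M2 v_def w_def al_def by (simp add: algebra_simps)
        also have "\<dots> = (1-s) * z 2 2 + s * (la * z 2 1 + mu * z 2 3)"
          using eq by (simp add: v_def)
        finally have "(x 2, y 2, (1-s) * z 2 2 + s * (la * z 2 1 + mu * z 2 3))
            = (x 1, y 2, c 1) + be *\<^sub>R (x 3 - x 1, 0, c 3 - c 1)"
          using xe' by simp
        then show ?thesis unfolding L_def by blast
      qed
      show ?thesis using that p1 p2 p3 memA[OF ts(1,2)] memA[OF ts(3,4)]
        unfolding c_def by blast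
    qed
    ultimately show ?thesis by blast
  qed
qed

end
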